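(* Let $n \geq 10$, $l = \lfloor n/2 \rfloor$, let $V$ be a real vector space with basis $\varepsilon_1,\dots,\varepsilon_l$, and let $\Delta = \{\sum_{i=1}^l k_i\varepsilon_i \mid k_i \in \{0,\pm1\}\} \setminus \{0\}$ (the root system of the Cartan type Lie superalgebra $H(n)$). Then $\Delta$ has a parabolic subset which is not strongly parabolic.
   Context: A subset $P \subset \Delta$ is parabolic if $\Delta = P \cup -P$ and $\alpha,\beta\in P$, $\alpha+\beta\in\Delta$ imply $\alpha+\beta\in P$. A triangular decomposition $\Delta = \Delta^-\sqcup\Delta^0\sqcup\Delta^+$ is given by some $\lambda\in V^*$ via $\Delta^0 = \Delta\cap\ker\lambda$, $\Delta^\pm = \{\alpha\in\Delta \mid \lambda(\alpha)\gtrless0\}$. $P \subset \Delta$ is strongly parabolic (recursively) if $P = \Delta$, or $P = P^0\sqcup\Delta^+$ for some triangular decomposition (with function $\lambda$) and some $P^0\subset\Delta^0$ which is strongly parabolic as a subset of $\Delta^0$ regarded in the vector space $\ker\lambda$. *)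

theory Defs
  imports "HOL-Analysis.Analysis"
begin

definition parabolic :: "'a::real_vector set \<Rightarrow> 'a set \<Rightarrow> bool" where
  "parabolic D P \<longleftrightarrow> P \<subseteq> D \<and> D = P \<union> uminus ` P \<and>
     (\<forall>a\<in>P. \<forall>b\<in>P. a + b \<in> D \<longrightarrow> a + b \<in> P)"

text \<open>A functional on the subspace
  ker lambda is the restriction of a linear functional on the whole space, so the
  recursion quantifies over linear functionals on the ambient space.\<close>
inductive strongly_parabolic :: "'a::real_vector set \<Rightarrow> 'a set \<Rightarrow> bool" where
  sp_all: "strongly_parabolic D D"
| sp_step: "linear (f :: 'a \<Rightarrow> real) \<Longrightarrow>
     strongly_parabolic {a \<in> D. f a = 0} P0 \<Longrightarrow>
     strongly_parabolic D (P0 \<union> {a \<in> D. f a > 0})"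

text \<open>Root system of H(n): nonzero vectors with all coordinates in {0,1,-1}
  in the space with basis indexed by 'l (of cardinality floor(n/2)).\<close>
definition H_roots :: "(real ^ 'l) set" where
  "H_roots = {v. (\<forall>i. v $ i \<in> {-1, 0, 1}) \<and> v \<noteq> 0}"

end

theory Submission
  imports Defs
begin

lemma sp_sub: "strongly_parabolic D P \<Longrightarrow> P \<subseteq> D"
  by (induction rule: strongly_parabolic.induct) auto

lemma sp_inv:
  assumes "strongly_parabolic D P"
  shows "finite D \<Longrightarrow> (\<forall>x. 0 \<le> d x) \<Longrightarrow> (\<forall>x. 0 \<le> c x) \<Longrightarrow>
    (\<Sum>x\<in>D-P. d x *\<^sub>R x) = (\<Sum>x\<in>P. c x *\<^sub>R x) \<Longrightarrow> x \<in> D - P \<Longrightarrow> d x = 0"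
  using assms
proof (induction arbitrary: d c x rule: strongly_parabolic.induct)
  case (sp_all D)
  then show ?case by simp
next
  case (sp_step f D P0)
  define D0 where "D0 = {a \<in> D. f a = 0}"
  define Pos where "Pos = {a \<in> D. f a > 0}"
  define Neg where "Neg = {a \<in> D. f a < 0}"
  have sub: "P0 \<subseteq> D0" using sp_sub[OF sp_step.hyps(2)] D0_def by simp
  have fD0: "finite D0" "finite Pos" "finite Neg" "finite P0"
    using sp_step.prems(1) sub by (auto simp: D0_def Pos_def Neg_def intro: finite_subset)
  have dec1: "D - (P0 \<union> Pos) = (D0 - P0) \<union> Neg"
  proof (rule set_eqI)
    fix x show "x \<in> D - (P0 \<union> Pos) \<longleftrightarrow> x \<in> (D0 - P0) \<union> Neg"
    proof
      assume "x \<in> D - (P0 \<union> Pos)"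
      hence "x \<in> D" "x \<notin> P0" "\<not> f x > 0" by (auto simp: Pos_def)
      thus "x \<in> (D0 - P0) \<union> Neg" unfolding D0_def Neg_def by force
    next
      assume a: "x \<in> (D0 - P0) \<union> Neg"
      hence "x \<in> D" "\<not> f x > 0" by (auto simp: D0_def Neg_def)
      moreover have "x \<notin> P0" using a sub by (auto simp: Neg_def D0_def)
      ultimately show "x \<in> D - (P0 \<union> Pos)" by (simp add: Pos_def)
    qed
  qed
  have dis1: "(D0 - P0) \<inter> Neg = {}" by (auto simp: D0_def Neg_def)
  have dis2: "P0 \<inter> Pos = {}" using sub by (auto simp: D0_def Pos_def)
  have eq: "(\<Sum>x\<in>D0-P0. d x *\<^sub>R x) + (\<Sum>x\<in>Neg. d x *\<^sub>R x)
      = (\<Sum>x\<in>P0. c x *\<^sub>R x) + (\<Sum>x\<in>Pos. c x *\<^sub>R x)"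
    using sp_step.prems(4) unfolding Pos_def[symmetric] dec1
    by (simp add: sum.union_disjoint fD0 dis1 dis2)
  have lin: "linear f" by fact
  have "f ((\<Sum>x\<in>D0-P0. d x *\<^sub>R x) + (\<Sum>x\<in>Neg. d x *\<^sub>R x))
      = f ((\<Sum>x\<in>P0. c x *\<^sub>R x) + (\<Sum>x\<in>Pos. c x *\<^sub>R x))" using eq by simp
  hence feq: "(\<Sum>x\<in>D0-P0. d x * f x) + (\<Sum>x\<in>Neg. d x * f x)
      = (\<Sum>x\<in>P0. c x * f x) + (\<Sum>x\<in>Pos. c x * f x)"
    by (simp add: linear_add[OF lin] linear_sum[OF lin] linear_cmul[OF lin])
  have z1: "(\<Sum>x\<in>D0-P0. d x * f x) = 0" by (rule sum.neutral) (auto simp: D0_def)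
  have z2: "(\<Sum>x\<in>P0. c x * f x) = 0" by (rule sum.neutral) (use sub in \<open>auto simp: D0_def\<close>)
  have n1: "\<forall>x\<in>Neg. - (d x * f x) \<ge> 0"
    using sp_step.prems(2) by (auto simp: Neg_def mult_nonneg_nonpos)
  have n2: "\<forall>x\<in>Pos. c x * f x \<ge> 0"
    using sp_step.prems(3) by (auto simp: Pos_def)
  have s1: "(\<Sum>x\<in>Neg. - (d x * f x)) \<ge> 0" using n1 by (intro sum_nonneg) auto
  have s2: "(\<Sum>x\<in>Pos. c x * f x) \<ge> 0" using n2 by (intro sum_nonneg) auto
  have ng: "(\<Sum>x\<in>Neg. - (d x * f x)) = - (\<Sum>x\<in>Neg. d x * f x)" by (rule sum_negf)
  have e1: "(\<Sum>x\<in>Neg. - (d x * f x)) = 0" and e2: "(\<Sum>x\<in>Pos. c x * f x) = 0"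
    using feq z1 z2 s1 s2 ng by linarith+
  have dz: "\<forall>x\<in>Neg. d x = 0"
  proof
    fix x assume x: "x \<in> Neg"
    have "- (d x * f x) = 0" using iffD1[OF sum_nonneg_eq_0_iff[OF fD0(3)] e1] n1 x by simp
    thus "d x = 0" using x by (auto simp: Neg_def)
  qed
  have cz: "\<forall>x\<in>Pos. c x = 0"
  proof
    fix x assume x: "x \<in> Pos"
    have "c x * f x = 0" using iffD1[OF sum_nonneg_eq_0_iff[OF fD0(2)] e2] n2 x by simp
    thus "c x = 0" using x by (auto simp: Pos_def)
  qed
  have "(\<Sum>x\<in>Neg. d x *\<^sub>R x) = 0" using dz by simp
  moreover have "(\<Sum>x\<in>Pos. c x *\<^sub>R x) = 0" using cz by simp
  ultimately have eq0: "(\<Sum>x\<in>D0-P0. d x *\<^sub>R x) = (\<Sum>x\<in>P0. c x *\<^sub>R x)" using eq by simp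
  show ?case
  proof (cases "x \<in> Neg")
    case True thus ?thesis using dz by blast
  next
    case False
    have "x \<in> D - (P0 \<union> Pos)" using sp_step.prems(5) unfolding Pos_def .
    hence "x \<in> (D0 - P0) \<union> Neg" unfolding dec1 .
    hence xx: "x \<in> D0 - P0" using False by blast
    have h1: "finite {a \<in> D. f a = 0}" using fD0(1) unfolding D0_def .
    have h4: "(\<Sum>x\<in>{a \<in> D. f a = 0}-P0. d x *\<^sub>R x) = (\<Sum>x\<in>P0. c x *\<^sub>R x)"
      using eq0 unfolding D0_def .
    have h5: "x \<in> {a \<in> D. f a = 0} - P0" using xx unfolding D0_def .
    show ?thesis by (rule sp_step.IH[OF h1 sp_step.prems(2,3) h4 h5])
  qed
qed

lemma core5:
  fixes c1 c2 c3 c4 c5 :: real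
  assumes "c1 = -1 \<or> c1 = 0 \<or> c1 = 1" "c2 = -1 \<or> c2 = 0 \<or> c2 = 1" "c3 = -1 \<or> c3 = 0 \<or> c3 = 1"
   "c4 = -1 \<or> c4 = 0 \<or> c4 = 1" "c5 = -1 \<or> c5 = 0 \<or> c5 = 1"
    "4*c1+5*c2+10*c3-2*c4-c5 = 0"
  shows "(c1,c2,c3,c4,c5) \<in> {(0,0,0,0,0),
     (-1,1,0,0,1),(1,-1,0,-1,1),(-1,-1,1,1,-1),(1,1,-1,0,-1),
     (1,-1,0,0,-1),(-1,1,0,1,-1),(1,1,-1,-1,1),(-1,-1,1,0,1)}"
  using assms(1-5) proof (elim disjE)
qed (use assms(6) in simp_all)

lemma clos5:
  fixes a1 a2 a3 a4 a5 b1 b2 b3 b4 b5 :: real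
  assumes "(a1,a2,a3,a4,a5) \<in> {(0,0,0,0,0),(1,-1,0,0,-1),(-1,1,0,1,-1),(1,1,-1,-1,1),(-1,-1,1,0,1)}"
    "(b1,b2,b3,b4,b5) \<in> {(0,0,0,0,0),(1,-1,0,0,-1),(-1,1,0,1,-1),(1,1,-1,-1,1),(-1,-1,1,0,1)}"
    "a1+b1 = -1 \<or> a1+b1 = 0 \<or> a1+b1 = 1" "a2+b2 = -1 \<or> a2+b2 = 0 \<or> a2+b2 = 1"
    "a3+b3 = -1 \<or> a3+b3 = 0 \<or> a3+b3 = 1" "a4+b4 = -1 \<or> a4+b4 = 0 \<or> a4+b4 = 1"
    "a5+b5 = -1 \<or> a5+b5 = 0 \<or> a5+b5 = 1"
  shows "(a1+b1,a2+b2,a3+b3,a4+b4,a5+b5) \<notin> {(-1,1,0,0,1),(1,-1,0,-1,1),(-1,-1,1,1,-1),(1,1,-1,0,-1)}"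
proof -
  from assms(1) have A: "(a1=0 \<and> a2=0 \<and> a3=0 \<and> a4=0 \<and> a5=0) \<or> (a1=1 \<and> a2= -1 \<and> a3=0 \<and> a4=0 \<and> a5= -1)
    \<or> (a1= -1 \<and> a2=1 \<and> a3=0 \<and> a4=1 \<and> a5= -1) \<or> (a1=1 \<and> a2=1 \<and> a3= -1 \<and> a4= -1 \<and> a5=1)
    \<or> (a1= -1 \<and> a2= -1 \<and> a3=1 \<and> a4=0 \<and> a5=1)" by simp
  from assms(2) have B: "(b1=0 \<and> b2=0 \<and> b3=0 \<and> b4=0 \<and> b5=0) \<or> (b1=1 \<and> b2= -1 \<and> b3=0 \<and> b4=0 \<and> b5= -1)
    \<or> (b1= -1 \<and> b2=1 \<and> b3=0 \<and> b4=1 \<and> b5= -1) \<or> (b1=1 \<and> b2=1 \<and> b3= -1 \<and> b4= -1 \<and> b5=1)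
    \<or> (b1= -1 \<and> b2= -1 \<and> b3=1 \<and> b4=0 \<and> b5=1)" by simp
  show ?thesis using A B proof (elim disjE conjE)
  qed (use assms(3-7) in simp_all)
qed

lemma five_distinct:
  fixes dummy :: "'l::finite"
  assumes "CARD('l) \<ge> 5"
  obtains i1 i2 i3 i4 i5 :: 'l where "distinct [i1,i2,i3,i4,i5]"
proof -
  obtain S :: "'l set" where S: "card S = 5"
    using obtain_subset_with_card_n[of 5 "UNIV::'l set"] assms by auto
  have "finite S" by simp
  then obtain xs where xs: "set xs = S" "distinct xs" using finite_distinct_list by blast
  hence "length xs = 5" using S distinct_card by metis
  then obtain a b c d e where "xs = [a,b,c,d,e]" by (auto simp: numeral_eq_Suc length_Suc_conv)
  thus ?thesis using that xs by blast
qed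

lemma H_finite: "finite (H_roots :: (real ^ 'l::finite) set)"
proof -
  have "H_roots \<subseteq> vec_lambda ` (PiE UNIV (\<lambda>_::'l. {-1,0,1::real}))"
  proof
    fix v :: "real^'l" assume "v \<in> H_roots"
    hence "vec_nth v \<in> PiE UNIV (\<lambda>_::'l. {-1,0,1::real})"
      by (auto simp: H_roots_def PiE_UNIV_domain)
    moreover have "v = vec_lambda (vec_nth v)" by simp
    ultimately show "v \<in> vec_lambda ` (PiE UNIV (\<lambda>_::'l. {-1,0,1::real}))" by blast
  qed
  moreover have "finite (PiE UNIV (\<lambda>_::'l. {-1,0,1::real}))" by (intro finite_PiE) auto
  ultimately show ?thesis using finite_subset by blast
qed

theorem mainTheorem4:
  fixes n :: nat
  assumes "n \<ge> 10" and "CARD('l::finite) = n div 2"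
  shows "\<exists>P. parabolic (H_roots :: (real ^ 'l) set) P \<and>
               \<not> strongly_parabolic (H_roots :: (real ^ 'l) set) P"
proof -
  have "CARD('l) \<ge> 5" using assms by linarith
  then obtain i1 i2 i3 i4 i5 :: 'l where dd: "distinct [i1,i2,i3,i4,i5]" by (rule five_distinct)
  hence dist: "i1 \<noteq> i2" "i1 \<noteq> i3" "i1 \<noteq> i4" "i1 \<noteq> i5" "i2 \<noteq> i3" "i2 \<noteq> i4" "i2 \<noteq> i5"
    "i3 \<noteq> i4" "i3 \<noteq> i5" "i4 \<noteq> i5" by auto
  define H where "H = (H_roots :: (real ^ 'l) set)"
  define g :: "real^'l \<Rightarrow> real" where "g a = 4*a$i1+5*a$i2+10*a$i3-2*a$i4-a$i5" for a
  define tp :: "real^'l \<Rightarrow> real\<times>real\<times>real\<times>real\<times>real" where "tp a = (a$i1, a$i2, a$i3, a$i4, a$i5)" for a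
  define XS :: "(real\<times>real\<times>real\<times>real\<times>real) set"
    where "XS = {(-1,1,0,0,1),(1,-1,0,-1,1),(-1,-1,1,1,-1),(1,1,-1,0,-1)}"
  define P where "P = {a \<in> H. g a > 0 \<or> (g a = 0 \<and> tp a \<notin> XS)}"
  have coord: "a $ i = -1 \<or> a $ i = 0 \<or> a $ i = 1" if "a \<in> H" for a i
    using that by (auto simp: H_def H_roots_def)
  have Hneg: "-a \<in> H" if "a \<in> H" for a
    using that by (auto simp: H_def H_roots_def)
  have gadd: "g (a+b) = g a + g b" for a b by (simp add: g_def algebra_simps)
  have gneg: "g (-a) = - g a" for a by (simp add: g_def algebra_simps)
  have core: "tp a \<in> {(0,0,0,0,0),
     (-1,1,0,0,1),(1,-1,0,-1,1),(-1,-1,1,1,-1),(1,1,-1,0,-1),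
     (1,-1,0,0,-1),(-1,1,0,1,-1),(1,1,-1,-1,1),(-1,-1,1,0,1)}" if "a \<in> H" "g a = 0" for a
    unfolding tp_def by (rule core5[OF coord coord coord coord coord]) (use that in \<open>simp_all add: g_def\<close>)
  have par: "parabolic H P"
    unfolding parabolic_def
  proof (intro conjI)
    show "P \<subseteq> H" by (auto simp: P_def)
    show "H = P \<union> uminus ` P"
    proof
      show "P \<union> uminus ` P \<subseteq> H" using Hneg by (auto simp: P_def)
      show "H \<subseteq> P \<union> uminus ` P"
      proof
        fix a assume aH: "a \<in> H"
        show "a \<in> P \<union> uminus ` P"
        proof (cases "g a" "0::real" rule: linorder_cases)
          case less
          hence "-a \<in> P" using Hneg[OF aH] gneg by (auto simp: P_def)
          hence "- (-a) \<in> uminus ` P" by blast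
          thus ?thesis by simp
        next
          case greater thus ?thesis using aH by (auto simp: P_def)
        next
          case equal
          show ?thesis
          proof (cases "tp a \<in> XS")
            case False thus ?thesis using aH equal by (auto simp: P_def)
          next
            case True
            have "tp (-a) \<notin> XS" using True by (auto simp: tp_def XS_def)
            hence "-a \<in> P" using Hneg[OF aH] gneg equal by (auto simp: P_def)
            hence "- (-a) \<in> uminus ` P" by blast
            thus ?thesis by simp
          qed
        qed
      qed
    qed
    show "\<forall>a\<in>P. \<forall>b\<in>P. a + b \<in> H \<longrightarrow> a + b \<in> P"
    proof (intro ballI impI)
      fix a b assume a: "a \<in> P" and b: "b \<in> P" and ab: "a + b \<in> H"
      have ga: "g a \<ge> 0" and gb: "g b \<ge> 0" using a b by (auto simp: P_def)
      show "a + b \<in> P"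
      proof (cases "g a + g b > 0")
        case True thus ?thesis using ab gadd by (simp add: P_def)
      next
        case False
        hence g0: "g a = 0" "g b = 0" using ga gb by linarith+
        have aH: "a \<in> H" and bH: "b \<in> H" using a b by (auto simp: P_def)
        have ta: "tp a \<notin> XS" and tb: "tp b \<notin> XS" using a b g0 by (auto simp: P_def)
        have ca: "tp a \<in> {(0,0,0,0,0),(1,-1,0,0,-1),(-1,1,0,1,-1),(1,1,-1,-1,1),(-1,-1,1,0,1)}"
          using core[OF aH g0(1)] ta by (simp add: XS_def)
        have cb: "tp b \<in> {(0,0,0,0,0),(1,-1,0,0,-1),(-1,1,0,1,-1),(1,1,-1,-1,1),(-1,-1,1,0,1)}"
          using core[OF bH g0(2)] tb by (simp add: XS_def)
        have "tp (a+b) \<notin> XS"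
          using clos5[OF ca[unfolded tp_def] cb[unfolded tp_def]]
            coord[OF ab, of i1] coord[OF ab, of i2] coord[OF ab, of i3] coord[OF ab, of i4] coord[OF ab, of i5]
          by (simp add: tp_def XS_def)
        thus ?thesis using ab gadd g0 by (simp add: P_def)
      qed
    qed
  qed
  define mk :: "real \<Rightarrow> real \<Rightarrow> real \<Rightarrow> real \<Rightarrow> real \<Rightarrow> real^'l" where
    "mk c1 c2 c3 c4 c5 = (\<chi> j. if j = i1 then c1 else if j = i2 then c2 else if j = i3 then c3
       else if j = i4 then c4 else if j = i5 then c5 else 0)" for c1 c2 c3 c4 c5
  have mk1: "mk c1 c2 c3 c4 c5 $ i1 = c1" "mk c1 c2 c3 c4 c5 $ i2 = c2" "mk c1 c2 c3 c4 c5 $ i3 = c3"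
    "mk c1 c2 c3 c4 c5 $ i4 = c4" "mk c1 c2 c3 c4 c5 $ i5 = c5" for c1 c2 c3 c4 c5
    using dist by (auto simp: mk_def)
  have mkH: "mk c1 c2 c3 c4 c5 \<in> H" if "c1 \<in> {-1,0,1}" "c2 \<in> {-1,0,1}" "c3 \<in> {-1,0,1}"
    "c4 \<in> {-1,0,1}" "c5 \<in> {-1,0,1}" "c1 \<noteq> 0" for c1 c2 c3 c4 c5
  proof -
    have "\<forall>j. mk c1 c2 c3 c4 c5 $ j \<in> {-1,0,1}" using that by (simp add: mk_def)
    moreover have "mk c1 c2 c3 c4 c5 \<noteq> 0" using mk1(1)[of c1 c2 c3 c4 c5] that(6) by auto
    ultimately show ?thesis by (simp add: H_def H_roots_def)
  qed
  have mkP: "mk c1 c2 c3 c4 c5 \<notin> P" if "(c1,c2,c3,c4,c5) \<in> XS" for c1 c2 c3 c4 c5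
  proof -
    have "g (mk c1 c2 c3 c4 c5) = 0" using that by (auto simp: g_def mk1 XS_def)
    moreover have "tp (mk c1 c2 c3 c4 c5) \<in> XS" using that by (simp add: tp_def mk1)
    ultimately show ?thesis by (simp add: P_def)
  qed
  define v1 where "v1 = mk (-1) 1 0 0 1"
  define v2 where "v2 = mk 1 (-1) 0 (-1) 1"
  define v3 where "v3 = mk (-1) (-1) 1 1 (-1)"
  define v4 where "v4 = mk 1 1 (-1) 0 (-1)"
  define V where "V = {v1,v2,v3,v4}"
  have VHP: "V \<subseteq> H - P"
    unfolding V_def v1_def v2_def v3_def v4_def
    using mkH mkP by (simp add: XS_def)
  have vdist: "v1 \<noteq> v2" "v1 \<noteq> v3" "v1 \<noteq> v4" "v2 \<noteq> v3" "v2 \<noteq> v4" "v3 \<noteq> v4"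
    unfolding v1_def v2_def v3_def v4_def
    by (metis mk1 zero_neq_one neg_equal_zero one_neq_neg_one zero_neq_neg_one)+
  have vsum: "v1 + v2 + v3 + v4 = 0"
    unfolding v1_def v2_def v3_def v4_def by (simp add: vec_eq_iff mk_def)
  have "\<not> strongly_parabolic H P"
  proof
    assume sp: "strongly_parabolic H P"
    define d :: "real^'l \<Rightarrow> real" where "d x = (if x \<in> V then 1 else 0)" for x
    have fin: "finite H" unfolding H_def by (rule H_finite)
    have "(\<Sum>x\<in>H-P. d x *\<^sub>R x) = (\<Sum>x\<in>H-P. if x \<in> V then x else 0)"
      by (rule sum.cong) (auto simp: d_def)
    also have "\<dots> = (\<Sum>x\<in>(H-P) \<inter> V. x)" using sum.inter_restrict[of "H-P" "\<lambda>x. x" V] fin by simp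
    also have "(H-P) \<inter> V = V" using VHP by blast
    also have "(\<Sum>x\<in>V. x) = v1 + v2 + v3 + v4" unfolding V_def using vdist by (simp add: add.assoc)
    also have "\<dots> = (\<Sum>x\<in>P. (\<lambda>_. 0::real) x *\<^sub>R x)" using vsum by simp
    finally have eq: "(\<Sum>x\<in>H-P. d x *\<^sub>R x) = (\<Sum>x\<in>P. (\<lambda>_. 0::real) x *\<^sub>R x)" .
    have "v1 \<in> H - P" using VHP V_def by blast
    have "d v1 = 0"
      by (rule sp_inv[OF sp fin _ _ eq \<open>v1 \<in> H - P\<close>]) (auto simp: d_def)
    thus False by (simp add: d_def V_def)
  qed
  with par show ?thesis unfolding H_def by blast
qed

end
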